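(* Let $d\ge0$ be an even integer and $\lambda\in(0,\infty)\setminus\mathbb{N}$ with $d\le -2+2\left\lfloor\frac{\lambda+1}{2}\right\rfloor$. Then $S_{d,\mathbf{w}^\lambda}=S_{d+1,\mathbf{w}^\lambda}$.
   Context: Let $\phi:[0,1]\to(0,1]$ be non-increasing with $\phi(0)=1$ (in particular positive on $[0,1)$), $\omega(x)=\phi(|x|)$ for $|x|\le1$ and $0$ otherwise, and $w^\lambda_m=\omega(m/\lambda)$, $m\in\mathbb{Z}$. For an integer $e\ge0$ let $\Pi_e$ be the real polynomials of degree at most $e$. For $i\in\{0,1\}$ let $M_i=\{m\in\mathbb{Z}: m\equiv i\pmod 2,\ |m|<\lambda\}$. The weighted local polynomial regression scheme $S_{e,\mathbf{w}^\lambda}$ maps a real sequence $\mathbf{f}=(f_j)_{j\in\mathbb{Z}}$ to $(S\mathbf{f})_{2j+i}=\hat p(0)$ ($i\in\{0,1\}$, $j\in\mathbb{Z}$), where $\hat p$ is a minimizer of $\sum_{m\in M_i} w^\lambda_m(f_{j+(m+i)/2}-p(m))^2$ over $p\in\Pi_e$ (when the minimizer is not unique, $\hat p$ is an interpolating polynomial and its value at $0$ is independent of the choice). *)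

theory Defs
  imports Complex_Main "HOL-Computational_Algebra.Polynomial"
begin

definition omega :: "(real \<Rightarrow> real) \<Rightarrow> real \<Rightarrow> real" where
  "omega phi x = (if \<bar>x\<bar> \<le> 1 then phi \<bar>x\<bar> else 0)"

definition wlam :: "(real \<Rightarrow> real) \<Rightarrow> real \<Rightarrow> int \<Rightarrow> real" where
  "wlam phi lam m = omega phi (real_of_int m / lam)"

definition Mset :: "real \<Rightarrow> int \<Rightarrow> int set" where
  "Mset lam i = {m. m mod 2 = i mod 2 \<and> \<bar>real_of_int m\<bar> < lam}"

definition lpr_cost ::
  "(int \<Rightarrow> real) \<Rightarrow> int set \<Rightarrow> (int \<Rightarrow> real) \<Rightarrow> int \<Rightarrow> int \<Rightarrow> real poly \<Rightarrow> real" where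
  "lpr_cost w M f j i p =
     (\<Sum>m\<in>M. w m * (f (j + (m + i) div 2) - poly p (real_of_int m))\<^sup>2)"

definition lpr_scheme ::
  "nat \<Rightarrow> (real \<Rightarrow> real) \<Rightarrow> real \<Rightarrow> (int \<Rightarrow> real) \<Rightarrow> int \<Rightarrow> real" where
  "lpr_scheme e phi lam f k =
     (let i = k mod 2; j = k div 2;
          c = lpr_cost (wlam phi lam) (Mset lam i) f j i;
          p = (SOME p. degree p \<le> e \<and> (\<forall>q. degree q \<le> e \<longrightarrow> c p \<le> c q))
      in poly p 0)"

end

theory Submission
  imports Defs
begin

definition V :: "nat \<Rightarrow> real poly set" where
  "V n = {p. \<forall>k\<ge>n. coeff p k = 0}"

lemma V_deg: "(p \<in> V (Suc e)) = (degree p \<le> e)"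
proof
  assume "p \<in> V (Suc e)"
  then show "degree p \<le> e" unfolding V_def by (intro degree_le) auto
next
  assume "degree p \<le> e"
  then show "p \<in> V (Suc e)" unfolding V_def by (auto intro!: coeff_eq_0)
qed

lemma exists_orth:
  fixes M :: "int set" and w :: "int \<Rightarrow> real"
  assumes fin: "finite M" and wnn: "\<forall>m\<in>M. 0 \<le> w m"
  shows "\<forall>y. \<exists>p\<in>V n. \<forall>q\<in>V n. (\<Sum>m\<in>M. w m * (y m - poly p (of_int m)) * poly q (of_int m)) = 0"
proof (induction n)
  case 0
  have "V 0 = {0}" unfolding V_def by (auto simp: poly_eq_iff)
  then show ?case by auto
next
  case (Suc n)
  show ?case
  proof
    fix y :: "int \<Rightarrow> real"
    obtain p0 where p0: "p0 \<in> V n" "\<forall>q\<in>V n. (\<Sum>m\<in>M. w m * (y m - poly p0 (of_int m)) * poly q (of_int m)) = 0"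
      using Suc.IH by blast
    obtain q0 where q0: "q0 \<in> V n" "\<forall>q\<in>V n. (\<Sum>m\<in>M. w m * ((\<lambda>m. poly (monom 1 n) (of_int m)) m - poly q0 (of_int m)) * poly q (of_int m)) = 0"
      using spec[OF Suc.IH, of "\<lambda>m. poly (monom 1 n) (of_int m)"] by blast
    define r where "r = monom 1 n - q0"
    define B where "B = (\<Sum>m\<in>M. w m * poly r (of_int m) * poly r (of_int m))"
    define A where "A = (\<Sum>m\<in>M. w m * (y m - poly p0 (of_int m)) * poly r (of_int m))"
    define t where "t = (if B = 0 then 0 else A / B)"
    define p where "p = p0 + smult t r"
    have AB: "A - t * B = 0"
    proof (cases "B = 0")
      case True
      have "\<forall>m\<in>M. w m * poly r (of_int m) * poly r (of_int m) = 0"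
        using True unfolding B_def
        by (subst sum_nonneg_eq_0_iff[symmetric]) (use fin wnn in \<open>auto simp: mult.assoc\<close>)
      then have "\<forall>m\<in>M. w m * poly r (of_int m) = 0" by auto
      then have "A = 0" unfolding A_def by (auto intro!: sum.neutral simp: algebra_simps)
      then show ?thesis using True t_def by simp
    next
      case False
      then show ?thesis unfolding t_def by simp
    qed
    have rV: "r \<in> V (Suc n)" using q0(1) unfolding V_def r_def by (auto simp: coeff_monom)
    have "p \<in> V (Suc n)" using p0(1) rV unfolding V_def p_def by auto
    moreover have "\<forall>q\<in>V (Suc n). (\<Sum>m\<in>M. w m * (y m - poly p (of_int m)) * poly q (of_int m)) = 0"
    proof
      fix q assume qV: "q \<in> V (Suc n)"
      define a where "a = coeff q n"
      define v where "v = q - monom a n + smult a q0"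
      have vV: "v \<in> V n" using qV q0(1) unfolding V_def v_def a_def
        by (auto simp: coeff_monom)
      have qv: "q = v + smult a r" unfolding v_def r_def by (simp add: algebra_simps smult_diff_right smult_monom)
      have S1: "(\<Sum>m\<in>M. w m * (y m - poly p0 (of_int m)) * poly v (of_int m)) = 0" using p0(2) vV by blast
      have S2: "(\<Sum>m\<in>M. w m * poly r (of_int m) * poly v (of_int m)) = 0"
        using q0(2) vV unfolding r_def by simp
      have "(\<Sum>m\<in>M. w m * (y m - poly p (of_int m)) * poly q (of_int m))
        = (\<Sum>m\<in>M. w m * (y m - poly p0 (of_int m)) * poly v (of_int m))
          - t * (\<Sum>m\<in>M. w m * poly r (of_int m) * poly v (of_int m)) + a * A - a * t * B"
      proof -
        have pw: "\<And>m. w m * (y m - poly p (of_int m)) * poly q (of_int m) = w m * (y m - poly p0 (of_int m)) * poly v (of_int m)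
          - t * (w m * poly r (of_int m) * poly v (of_int m)) + a * (w m * (y m - poly p0 (of_int m)) * poly r (of_int m)) - a * t * (w m * poly r (of_int m) * poly r (of_int m))"
          unfolding p_def qv by (simp add: algebra_simps)
        show ?thesis unfolding pw A_def B_def
          by (simp only: sum.distrib sum_subtractf sum_distrib_left[symmetric] mult.assoc)
      qed
      also have "\<dots> = a * (A - t * B)" using S1 S2 by (simp add: algebra_simps)
      finally show "(\<Sum>m\<in>M. w m * (y m - poly p (of_int m)) * poly q (of_int m)) = 0" using AB by simp
    qed
    ultimately show "\<exists>p\<in>V (Suc n). \<forall>q\<in>V (Suc n). (\<Sum>m\<in>M. w m * (y m - poly p (of_int m)) * poly q (of_int m)) = 0"
      by blast
  qed
qed

lemma orth_min:
  fixes M :: "int set" and w :: "int \<Rightarrow> real"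
  assumes fin: "finite M" and wnn: "\<forall>m\<in>M. 0 \<le> w m"
    and orth: "\<forall>q. degree q \<le> e \<longrightarrow> (\<Sum>m\<in>M. w m * (y m - poly p (of_int m)) * poly q (of_int m)) = 0"
    and dp: "degree p \<le> e" and dq: "degree q \<le> e"
  shows "(\<Sum>m\<in>M. w m * (y m - poly p (of_int m))\<^sup>2) \<le> (\<Sum>m\<in>M. w m * (y m - poly q (of_int m))\<^sup>2)"
proof -
  have d: "degree (p - q) \<le> e" using dp dq by (meson degree_diff_le le_trans max.bounded_iff degree_diff_le_max)
  have "(\<Sum>m\<in>M. w m * (y m - poly q (of_int m))\<^sup>2) =
     (\<Sum>m\<in>M. w m * (y m - poly p (of_int m))\<^sup>2) + 2 * (\<Sum>m\<in>M. w m * (y m - poly p (of_int m)) * poly (p - q) (of_int m))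
     + (\<Sum>m\<in>M. w m * (poly (p - q) (of_int m))\<^sup>2)"
  proof -
    have "\<And>m. w m * (y m - poly q (of_int m))\<^sup>2 = w m * (y m - poly p (of_int m))\<^sup>2 + 2 * (w m * (y m - poly p (of_int m)) * poly (p - q) (of_int m))
     + w m * (poly (p - q) (of_int m))\<^sup>2"
      by (simp add: power2_eq_square algebra_simps)
    then show ?thesis by (simp add: sum.distrib sum_distrib_left)
  qed
  also have "(\<Sum>m\<in>M. w m * (y m - poly p (of_int m)) * poly (p - q) (of_int m)) = 0"
    using orth d by blast
  finally show ?thesis using wnn by (simp add: sum_nonneg)
qed

lemma min_orth:
  fixes M :: "int set" and w :: "int \<Rightarrow> real"
  assumes fin: "finite M" and wnn: "\<forall>m\<in>M. 0 \<le> w m"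
    and mn: "\<forall>q. degree q \<le> e \<longrightarrow> (\<Sum>m\<in>M. w m * (y m - poly p (of_int m))\<^sup>2) \<le> (\<Sum>m\<in>M. w m * (y m - poly q (of_int m))\<^sup>2)"
    and dp: "degree p \<le> e" and dq: "degree q \<le> e"
  shows "(\<Sum>m\<in>M. w m * (y m - poly p (of_int m)) * poly q (of_int m)) = 0"
proof -
  define A where "A = (\<Sum>m\<in>M. w m * (y m - poly p (of_int m)) * poly q (of_int m))"
  define B where "B = (\<Sum>m\<in>M. w m * (poly q (of_int m))\<^sup>2)"
  have B0: "0 \<le> B" unfolding B_def using wnn by (simp add: sum_nonneg)
  define t where "t = A / (B + 1)"
  have "degree (p + smult t q) \<le> e" using dp dq
    by (meson degree_add_le degree_smult_le le_trans)
  then have "(\<Sum>m\<in>M. w m * (y m - poly p (of_int m))\<^sup>2) \<le> (\<Sum>m\<in>M. w m * (y m - poly (p + smult t q) (of_int m))\<^sup>2)"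
    using mn by blast
  also have "\<dots> = (\<Sum>m\<in>M. w m * (y m - poly p (of_int m))\<^sup>2) - 2 * t * A + t\<^sup>2 * B"
  proof -
    have pw: "\<And>m. w m * (y m - poly (p + smult t q) (of_int m))\<^sup>2 = w m * (y m - poly p (of_int m))\<^sup>2 - 2 * t * (w m * (y m - poly p (of_int m)) * poly q (of_int m)) + t\<^sup>2 * (w m * (poly q (of_int m))\<^sup>2)"
      by (simp add: power2_eq_square algebra_simps)
    show ?thesis unfolding pw A_def B_def
      by (simp only: sum.distrib sum_subtractf sum_distrib_left[symmetric])
  qed
  finally have "0 \<le> t\<^sup>2 * B - 2 * t * A" by simp
  then have "0 \<le> (t\<^sup>2 * B - 2 * t * A) * (B + 1)\<^sup>2" by simp
  also have "(t\<^sup>2 * B - 2 * t * A) * (B + 1)\<^sup>2 = - A\<^sup>2 * (B + 2)"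
  proof -
    have tB: "t * (B + 1) = A" unfolding t_def using B0 by simp
    have "(t\<^sup>2 * B - 2 * t * A) * (B + 1)\<^sup>2 = B * (t * (B + 1))\<^sup>2 - 2 * (t * (B + 1)) * A * (B + 1)"
      by (simp add: power2_eq_square algebra_simps)
    also have "\<dots> = - A\<^sup>2 * (B + 2)" unfolding tB by (simp add: power2_eq_square algebra_simps)
    finally show ?thesis .
  qed
  finally have "0 \<le> - A\<^sup>2 * (B + 2)" .
  then have "A\<^sup>2 * (B + 2) \<le> 0" by linarith
  moreover have "0 \<le> A\<^sup>2 * (B + 2)" using B0 by simp
  ultimately have "A\<^sup>2 * (B + 2) = 0" by linarith
  then have "A\<^sup>2 = 0" using B0 by simp
  then show ?thesis unfolding A_def[symmetric] by simp
qed

lemma min_exists: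
  fixes M :: "int set" and w :: "int \<Rightarrow> real"
  assumes fin: "finite M" and wnn: "\<forall>m\<in>M. 0 \<le> w m"
  shows "\<exists>p. degree p \<le> e \<and> (\<forall>q. degree q \<le> e \<longrightarrow> (\<Sum>m\<in>M. w m * (y m - poly p (of_int m))\<^sup>2) \<le> (\<Sum>m\<in>M. w m * (y m - poly q (of_int m))\<^sup>2))"
proof -
  obtain p where p: "p \<in> V (Suc e)" "\<forall>q\<in>V (Suc e). (\<Sum>m\<in>M. w m * (y m - poly p (of_int m)) * poly q (of_int m)) = 0"
    using exists_orth[OF fin wnn, of "Suc e"] by blast
  have dp: "degree p \<le> e" using p(1) V_deg by blast
  have "\<forall>q. degree q \<le> e \<longrightarrow> (\<Sum>m\<in>M. w m * (y m - poly p (of_int m)) * poly q (of_int m)) = 0"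
    using p(2) V_deg by blast
  then show ?thesis using orth_min[OF fin wnn _ dp] dp by blast
qed

lemma sym_zero:
  fixes M :: "int set" and w :: "int \<Rightarrow> real" and d :: nat
  assumes fin: "finite M" and wpos: "\<forall>m\<in>M. 0 < w m" and symM: "\<forall>m\<in>M. - m \<in> M"
    and symw: "\<forall>m. w (- m) = w m" and ev: "even d"
    and dp: "degree p \<le> Suc d"
    and mp: "\<forall>q. degree q \<le> Suc d \<longrightarrow> (\<Sum>m\<in>M. w m * (y m - poly p (of_int m))\<^sup>2) \<le> (\<Sum>m\<in>M. w m * (y m - poly q (of_int m))\<^sup>2)"
    and dp': "degree p' \<le> d"
    and mp': "\<forall>q. degree q \<le> d \<longrightarrow> (\<Sum>m\<in>M. w m * (y m - poly p' (of_int m))\<^sup>2) \<le> (\<Sum>m\<in>M. w m * (y m - poly q (of_int m))\<^sup>2)"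
  shows "\<exists>g. degree g \<le> d \<and> poly g 0 = poly p 0 - poly p' 0 \<and> (\<forall>m\<in>M. poly g (of_int m) = 0)"
proof -
  have wnn: "\<forall>m\<in>M. 0 \<le> w m" using wpos by auto
  define h where "h = p - p'"
  define g where "g = smult (1/2) (h + h \<circ>\<^sub>p [:0, -1:])"
  have pg: "\<And>x. poly g x = (poly h x + poly h (- x)) / 2"
    unfolding g_def by (simp add: poly_pcompose)
  have dh: "degree h \<le> Suc d" unfolding h_def using dp dp'
    by (meson degree_diff_le le_SucI)
  have dg: "degree g \<le> d"
  proof (rule degree_le, intro allI impI)
    fix i assume "d < i"
    have cg: "coeff g i = (coeff h i + (-1) ^ i * coeff h i) / 2"
      unfolding g_def by (simp add: coeff_pcompose_linear)
    show "coeff g i = 0"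
    proof (cases "i = Suc d")
      case True
      then have "odd i" using ev by simp
      then show ?thesis using cg by simp
    next
      case False
      then have "coeff h i = 0" using \<open>d < i\<close> dh by (intro coeff_eq_0) simp
      then show ?thesis using cg by simp
    qed
  qed
  have g0: "poly g 0 = poly p 0 - poly p' 0" using pg[of 0] unfolding h_def by simp
  have o1: "(\<Sum>m\<in>M. w m * (y m - poly p (of_int m)) * poly g (of_int m)) = 0"
    by (rule min_orth[OF fin wnn mp dp]) (use dg in linarith)
  have o2: "(\<Sum>m\<in>M. w m * (y m - poly p' (of_int m)) * poly g (of_int m)) = 0"
    using min_orth[OF fin wnn mp' dp' dg] .
  have hg: "(\<Sum>m\<in>M. w m * poly h (of_int m) * poly g (of_int m)) = 0"
  proof -
    have "(\<Sum>m\<in>M. w m * poly h (of_int m) * poly g (of_int m)) =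
      (\<Sum>m\<in>M. w m * (y m - poly p' (of_int m)) * poly g (of_int m)) - (\<Sum>m\<in>M. w m * (y m - poly p (of_int m)) * poly g (of_int m))"
    proof -
      have "\<And>m. w m * poly h (of_int m) * poly g (of_int m) = w m * (y m - poly p' (of_int m)) * poly g (of_int m) - w m * (y m - poly p (of_int m)) * poly g (of_int m)"
        unfolding h_def by (simp add: algebra_simps)
      then show ?thesis by (simp only: sum_subtractf)
    qed
    then show ?thesis using o1 o2 by simp
  qed
  have img: "uminus ` M = M"
  proof
    show "uminus ` M \<subseteq> M" using symM by auto
    show "M \<subseteq> uminus ` M"
    proof
      fix x assume "x \<in> M"
      then have "- x \<in> M" using symM by auto
      then show "x \<in> uminus ` M" by (metis image_eqI minus_minus)
    qed
  qed
  have refl: "(\<Sum>m\<in>M. F m) = (\<Sum>m\<in>M. F (- m))" for F :: "int \<Rightarrow> real"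
  proof -
    have "(\<Sum>m\<in>M. F m) = (\<Sum>m\<in>uminus ` M. F m)" using img by simp
    also have "\<dots> = (\<Sum>m\<in>M. F (- m))" by (subst sum.reindex) (auto simp: inj_on_def)
    finally show ?thesis .
  qed
  have geven: "\<And>x. poly g (- x) = poly g x" unfolding pg by simp
  have hg2: "(\<Sum>m\<in>M. w m * poly h (- of_int m) * poly g (of_int m)) = 0"
  proof -
    have "(\<Sum>m\<in>M. w m * poly h (of_int m) * poly g (of_int m)) = (\<Sum>m\<in>M. w (-m) * poly h (of_int (-m)) * poly g (of_int (-m)))"
      by (rule refl)
    also have "\<dots> = (\<Sum>m\<in>M. w m * poly h (- of_int m) * poly g (of_int m))"
      by (rule sum.cong) (simp_all add: symw geven)
    finally show ?thesis using hg by simp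
  qed
  have gg: "(\<Sum>m\<in>M. w m * (poly g (of_int m))\<^sup>2) = 0"
  proof -
    have "(\<Sum>m\<in>M. w m * (poly g (of_int m))\<^sup>2) = (1/2) * ((\<Sum>m\<in>M. w m * poly h (of_int m) * poly g (of_int m)) + (\<Sum>m\<in>M. w m * poly h (- of_int m) * poly g (of_int m)))"
    proof -
      have pw: "\<And>m. w m * (poly g (of_int m))\<^sup>2 = (1/2) * (w m * poly h (of_int m) * poly g (of_int m) + w m * poly h (- of_int m) * poly g (of_int m))"
        by (subst (1) power2_eq_square, subst (1) pg) (simp add: algebra_simps)
      have "(\<Sum>m\<in>M. w m * (poly g (of_int m))\<^sup>2) = (\<Sum>m\<in>M. (1/2) * (w m * poly h (of_int m) * poly g (of_int m) + w m * poly h (- of_int m) * poly g (of_int m)))"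
        by (rule sum.cong) (use pw in auto)
      also have "\<dots> = (1/2) * ((\<Sum>m\<in>M. w m * poly h (of_int m) * poly g (of_int m)) + (\<Sum>m\<in>M. w m * poly h (- of_int m) * poly g (of_int m)))"
        by (simp only: sum_distrib_left[symmetric] sum.distrib)
      finally show ?thesis .
    qed
    then show ?thesis using hg hg2 by simp
  qed
  have "\<forall>m\<in>M. w m * (poly g (of_int m))\<^sup>2 = 0"
    using gg by (subst sum_nonneg_eq_0_iff[symmetric]) (use fin wnn in auto)
  then have "\<forall>m\<in>M. poly g (of_int m) = 0"
  proof (intro ballI)
    fix m assume mM: "m \<in> M" and z: "\<forall>m\<in>M. w m * (poly g (of_int m))\<^sup>2 = 0"
    have "w m * (poly g (of_int m))\<^sup>2 = 0" using z mM by blast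
    moreover have "w m \<noteq> 0" using wpos mM by (metis less_irrefl)
    ultimately show "poly g (of_int m) = 0" by simp
  qed
  then show ?thesis using dg g0 by blast
qed

theorem proposition3p7:
  fixes phi :: "real \<Rightarrow> real" and lam :: real and d :: nat
  assumes phi_range: "\<forall>x\<in>{0..1}. 0 < phi x \<and> phi x \<le> 1"
    and phi_mono: "\<forall>x y. 0 \<le> x \<longrightarrow> x \<le> y \<longrightarrow> y \<le> 1 \<longrightarrow> phi y \<le> phi x"
    and phi0: "phi 0 = 1"
    and lam_pos: "0 < lam"
    and lam_nonnat: "lam \<notin> \<nat>"
    and d_even: "even d"
    and d_bound: "int d \<le> -2 + 2 * \<lfloor>(lam + 1) / 2\<rfloor>"
  shows "lpr_scheme d phi lam = lpr_scheme (d + 1) phi lam"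
proof (intro ext)
  fix f :: "int \<Rightarrow> real" and k :: int
  define M where "M = Mset lam (k mod 2)"
  define w where "w = wlam phi lam"
  define y where "y = (\<lambda>m. f (k div 2 + (m + k mod 2) div 2))"
  define C where "C = (\<lambda>p. \<Sum>m\<in>M. w m * (y m - poly p (of_int m))\<^sup>2)"
  have sch: "lpr_scheme e phi lam f k = poly (SOME p. degree p \<le> e \<and> (\<forall>q. degree q \<le> e \<longrightarrow> C p \<le> C q)) 0" for e
    unfolding lpr_scheme_def Let_def lpr_cost_def M_def w_def y_def C_def by simp
  have fin: "finite M"
  proof (rule finite_subset)
    show "M \<subseteq> {-\<lceil>lam\<rceil>..\<lceil>lam\<rceil>}"
    proof
      fix m assume "m \<in> M"
      then have "\<bar>real_of_int m\<bar> < lam" unfolding M_def Mset_def by auto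
      then have "real_of_int \<bar>m\<bar> < real_of_int \<lceil>lam\<rceil>" using le_of_int_ceiling[of lam] of_int_abs[of m] by linarith
      then have "\<bar>m\<bar> < \<lceil>lam\<rceil>" by (simp only: of_int_less_iff)
      then have "\<bar>m\<bar> \<le> \<lceil>lam\<rceil>" by simp
      then show "m \<in> {-\<lceil>lam\<rceil>..\<lceil>lam\<rceil>}" by auto
    qed
  qed simp
  have wpos: "\<forall>m\<in>M. 0 < w m"
  proof
    fix m assume "m \<in> M"
    then have lt: "\<bar>real_of_int m\<bar> < lam" unfolding M_def Mset_def by auto
    have "\<bar>real_of_int m / lam\<bar> = \<bar>real_of_int m\<bar> / lam" using lam_pos by simp
    also have "\<dots> < 1" using lt lam_pos by simp
    finally have "\<bar>real_of_int m / lam\<bar> < 1" .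
    then show "0 < w m" unfolding w_def wlam_def omega_def using phi_range by auto
  qed
  then have wnn: "\<forall>m\<in>M. 0 \<le> w m" by auto
  have mm: "(- m) mod 2 = m mod 2" for m :: int by presburger
  have symM: "\<forall>m\<in>M. - m \<in> M" unfolding M_def Mset_def using mm by auto
  have symw: "\<forall>m. w (- m) = w m" unfolding w_def wlam_def omega_def by simp
  have ex: "\<exists>p. degree p \<le> e \<and> (\<forall>q. degree q \<le> e \<longrightarrow> C p \<le> C q)" for e
    unfolding C_def by (rule min_exists[OF fin wnn])
  define p' where "p' = (SOME p. degree p \<le> d \<and> (\<forall>q. degree q \<le> d \<longrightarrow> C p \<le> C q))"
  define p where "p = (SOME p. degree p \<le> Suc d \<and> (\<forall>q. degree q \<le> Suc d \<longrightarrow> C p \<le> C q))"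
  have P': "degree p' \<le> d \<and> (\<forall>q. degree q \<le> d \<longrightarrow> C p' \<le> C q)"
    unfolding p'_def by (rule someI_ex[OF ex])
  have P: "degree p \<le> Suc d \<and> (\<forall>q. degree q \<le> Suc d \<longrightarrow> C p \<le> C q)"
    unfolding p_def by (rule someI_ex[OF ex])
  have dp: "degree p \<le> Suc d" using P by (rule conjunct1)
  have mp: "\<forall>q. degree q \<le> Suc d \<longrightarrow> (\<Sum>m\<in>M. w m * (y m - poly p (of_int m))\<^sup>2) \<le> (\<Sum>m\<in>M. w m * (y m - poly q (of_int m))\<^sup>2)"
    using P unfolding C_def by (rule conjunct2)
  have dp': "degree p' \<le> d" using P' by (rule conjunct1)
  have mp': "\<forall>q. degree q \<le> d \<longrightarrow> (\<Sum>m\<in>M. w m * (y m - poly p' (of_int m))\<^sup>2) \<le> (\<Sum>m\<in>M. w m * (y m - poly q (of_int m))\<^sup>2)"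
    using P' unfolding C_def by (rule conjunct2)
  obtain g where g: "degree g \<le> d" "poly g 0 = poly p 0 - poly p' 0" "\<forall>m\<in>M. poly g (of_int m) = 0"
    using sym_zero[OF fin wpos symM symw d_even dp mp dp' mp'] by blast
  have "poly g 0 = 0"
  proof (cases "k mod 2 = 0")
    case True
    then have "0 \<in> M" unfolding M_def Mset_def using lam_pos by simp
    then show ?thesis using g(3) by force
  next
    case False
    then have k1: "k mod 2 = 1" by presburger
    have "real (d + 1) \<le> lam"
    proof -
      have "real_of_int \<lfloor>(lam + 1) / 2\<rfloor> \<le> (lam + 1) / 2" by (rule of_int_floor_le)
      moreover have "real_of_int (int d) \<le> real_of_int (-2 + 2 * \<lfloor>(lam + 1) / 2\<rfloor>)"
        using d_bound by (simp only: of_int_le_iff)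
      then have "real d \<le> -2 + 2 * real_of_int \<lfloor>(lam + 1) / 2\<rfloor>" by simp
      ultimately show ?thesis by simp
    qed
    moreover have "real (d + 1) \<noteq> lam" using lam_nonnat of_nat_in_Nats by metis
    ultimately have dl: "real (d + 1) < lam" by simp
    define hh where "hh = int (d div 2)"
    have hd: "2 * hh = int d" unfolding hh_def using d_even by (auto elim!: evenE)
    define A where "A = (\<lambda>t. real_of_int (2 * t + 1)) ` {-(hh+1)..hh}"
    have cardA: "card A = d + 2"
    proof -
      have "inj_on (\<lambda>t. real_of_int (2 * t + 1)) {-(hh+1)..hh}" by (auto simp: inj_on_def)
      then have "card A = card {-(hh+1)..hh}" unfolding A_def by (rule card_image)
      also have "\<dots> = nat (2 * hh + 2)" by simp
      also have "\<dots> = d + 2" using hd by simp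
      finally show ?thesis .
    qed
    have "\<forall>x\<in>A. poly g x = poly 0 x"
    proof
      fix x assume "x \<in> A"
      then obtain t where t: "t \<in> {-(hh+1)..hh}" "x = real_of_int (2 * t + 1)" unfolding A_def by auto
      have "\<bar>2 * t + 1\<bar> \<le> int d + 1" using t(1) hd by auto
      then have "\<bar>real_of_int (2 * t + 1)\<bar> \<le> real (d + 1)" 
      proof -
        have "real_of_int \<bar>2 * t + 1\<bar> \<le> real_of_int (int d + 1)" using \<open>\<bar>2 * t + 1\<bar> \<le> int d + 1\<close> by (simp only: of_int_le_iff)
        then show ?thesis by simp
      qed
      then have "2 * t + 1 \<in> M" unfolding M_def Mset_def using dl k1 by auto
      then have "poly g (real_of_int (2 * t + 1)) = 0" using g(3) by blast
      then show "poly g x = poly 0 x" using t(2) by simp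
    qed
    then have "g = 0" by (intro poly_eqI_degree[of A]) (use cardA g(1) in auto)
    then show ?thesis by simp
  qed
  then show "lpr_scheme d phi lam f k = lpr_scheme (d + 1) phi lam f k"
  proof -
    have "lpr_scheme d phi lam f k = poly p' 0" unfolding sch p'_def ..
    moreover have "lpr_scheme (d + 1) phi lam f k = poly p 0" unfolding sch p_def by simp
    ultimately show ?thesis using g(2) \<open>poly g 0 = 0\<close> by simp
  qed
qed

end
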